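(* Let $\Gamma$ be a finite connected $(G,2)$-distance-transitive graph of square-free order, where $G$ is soluble, and let $F$ be the Fitting subgroup of $G$. If $|F|$ is square-free, then $F=C_G(F)$ is cyclic, and either $\Gamma\cong \mathrm{K}_{m[b]}$ with $m\ge3$, $b\ge2$ and $mb$ square-free, or $F$ is semiregular on $V(\Gamma)$ with at most $2$ orbits.
   Context: For $G\le\mathrm{Aut}(\Gamma)$, $\Gamma$ is $(G,2)$-distance-transitive if its diameter is at least $2$, $G$ is vertex-transitive and $G_u$ is transitive on $\Gamma(u)$ and $\Gamma_2(u)$ for every vertex $u$. The Fitting subgroup is the subgroup generated by all nilpotent normal subgroups. $\mathrm{K}_{m[b]}$ is the complete multipartite graph with $m$ parts of size $b$. *)

theory Defs
  imports "HOL-Algebra.Algebra" "HOL-Computational_Algebra.Squarefree"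
begin

fun walk_n :: "('a \<Rightarrow> 'a \<Rightarrow> bool) \<Rightarrow> 'a set \<Rightarrow> nat \<Rightarrow> 'a \<Rightarrow> 'a \<Rightarrow> bool" where
  "walk_n E V 0 u v = (u \<in> V \<and> u = v)"
| "walk_n E V (Suc n) u v = (u \<in> V \<and> (\<exists>w\<in>V. E u w \<and> walk_n E V n w v))"

definition simple_graph :: "'a set \<Rightarrow> ('a \<Rightarrow> 'a \<Rightarrow> bool) \<Rightarrow> bool" where
  "simple_graph V E \<longleftrightarrow> (\<forall>x\<in>V. \<forall>y\<in>V. E x y \<longleftrightarrow> E y x) \<and> (\<forall>x\<in>V. \<not> E x x)"

definition connected_graph :: "'a set \<Rightarrow> ('a \<Rightarrow> 'a \<Rightarrow> bool) \<Rightarrow> bool" where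
  "connected_graph V E \<longleftrightarrow> V \<noteq> {} \<and> (\<forall>u\<in>V. \<forall>v\<in>V. \<exists>n. walk_n E V n u v)"

definition gdist :: "'a set \<Rightarrow> ('a \<Rightarrow> 'a \<Rightarrow> bool) \<Rightarrow> 'a \<Rightarrow> 'a \<Rightarrow> nat" where
  "gdist V E u v = (LEAST n. walk_n E V n u v)"

definition sphere :: "'a set \<Rightarrow> ('a \<Rightarrow> 'a \<Rightarrow> bool) \<Rightarrow> nat \<Rightarrow> 'a \<Rightarrow> 'a set" where
  "sphere V E i u = {v \<in> V. gdist V E u v = i}"

definition diameter_ge :: "'a set \<Rightarrow> ('a \<Rightarrow> 'a \<Rightarrow> bool) \<Rightarrow> nat \<Rightarrow> bool" where
  "diameter_ge V E d \<longleftrightarrow> (\<exists>u\<in>V. \<exists>v\<in>V. gdist V E u v \<ge> d)"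

definition Aut :: "'a set \<Rightarrow> ('a \<Rightarrow> 'a \<Rightarrow> bool) \<Rightarrow> ('a \<Rightarrow> 'a) set" where
  "Aut V E = {g \<in> Bij V. \<forall>x\<in>V. \<forall>y\<in>V. E (g x) (g y) \<longleftrightarrow> E x y}"

definition perm_group :: "'a set \<Rightarrow> ('a \<Rightarrow> 'a) set \<Rightarrow> ('a \<Rightarrow> 'a) monoid" where
  "perm_group V G = (BijGroup V)\<lparr>carrier := G\<rparr>"

definition stab_transitive_on :: "('a \<Rightarrow> 'a) set \<Rightarrow> 'a \<Rightarrow> 'a set \<Rightarrow> bool" where
  "stab_transitive_on G u S \<longleftrightarrow> (\<forall>x\<in>S. \<forall>y\<in>S. \<exists>g\<in>G. g u = u \<and> g x = y)"

definition vertex_transitive :: "'a set \<Rightarrow> ('a \<Rightarrow> 'a) set \<Rightarrow> bool" where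
  "vertex_transitive V G \<longleftrightarrow> (\<forall>x\<in>V. \<forall>y\<in>V. \<exists>g\<in>G. g x = y)"

definition two_distance_transitive :: "'a set \<Rightarrow> ('a \<Rightarrow> 'a \<Rightarrow> bool) \<Rightarrow> ('a \<Rightarrow> 'a) set \<Rightarrow> bool" where
  "two_distance_transitive V E G \<longleftrightarrow>
     subgroup G (BijGroup V) \<and> G \<subseteq> Aut V E \<and> diameter_ge V E 2 \<and> vertex_transitive V G \<and>
     (\<forall>u\<in>V. stab_transitive_on G u (sphere V E 1 u) \<and> stab_transitive_on G u (sphere V E 2 u))"

definition iso_complete_multipartite :: "'a set \<Rightarrow> ('a \<Rightarrow> 'a \<Rightarrow> bool) \<Rightarrow> nat \<Rightarrow> nat \<Rightarrow> bool" where
  "iso_complete_multipartite V E m b \<longleftrightarrow>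
     (\<exists>f. bij_betw f V ({0..<m} \<times> {0..<b}) \<and>
          (\<forall>x\<in>V. \<forall>y\<in>V. E x y \<longleftrightarrow> fst (f x) \<noteq> fst (f y)))"

definition commutator_subgroup :: "('g, 'b) monoid_scheme \<Rightarrow> 'g set \<Rightarrow> 'g set \<Rightarrow> 'g set" where
  "commutator_subgroup G H K = generate G
     {h \<otimes>\<^bsub>G\<^esub> k \<otimes>\<^bsub>G\<^esub> inv\<^bsub>G\<^esub> h \<otimes>\<^bsub>G\<^esub> inv\<^bsub>G\<^esub> k | h k. h \<in> H \<and> k \<in> K}"

fun lower_central :: "('g, 'b) monoid_scheme \<Rightarrow> nat \<Rightarrow> 'g set" where
  "lower_central G 0 = carrier G"
| "lower_central G (Suc n) = commutator_subgroup G (lower_central G n) (carrier G)"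

definition nilpotent_group :: "('g, 'b) monoid_scheme \<Rightarrow> bool" where
  "nilpotent_group G \<longleftrightarrow> group G \<and> (\<exists>n. lower_central G n = {\<one>\<^bsub>G\<^esub>})"

definition fitting_subgroup :: "('g, 'b) monoid_scheme \<Rightarrow> 'g set" where
  "fitting_subgroup G = generate G (\<Union>{N. N \<lhd> G \<and> nilpotent_group (G\<lparr>carrier := N\<rparr>)})"

definition centraliser :: "('g, 'b) monoid_scheme \<Rightarrow> 'g set \<Rightarrow> 'g set" where
  "centraliser G H = {g \<in> carrier G. \<forall>h\<in>H. g \<otimes>\<^bsub>G\<^esub> h = h \<otimes>\<^bsub>G\<^esub> g}"

definition cyclic_subgroup :: "('g, 'b) monoid_scheme \<Rightarrow> 'g set \<Rightarrow> bool" where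
  "cyclic_subgroup G H \<longleftrightarrow> (\<exists>g\<in>H. H = generate G {g})"

definition semiregular :: "'a set \<Rightarrow> ('a \<Rightarrow> 'a) set \<Rightarrow> bool" where
  "semiregular V H \<longleftrightarrow> (\<forall>v\<in>V. \<forall>h\<in>H. h v = v \<longrightarrow> h = \<one>\<^bsub>BijGroup V\<^esub>)"

definition perm_orbits :: "'a set \<Rightarrow> ('a \<Rightarrow> 'a) set \<Rightarrow> 'a set set" where
  "perm_orbits V H = (\<lambda>v. {h v | h. h \<in> H}) ` V"

end

theory Submission
  imports Defs
begin

lemma (in group) commute_generate:
  assumes a: "a \<in> carrier G" and S: "S \<subseteq> carrier G" and c: "\<forall>s\<in>S. s \<otimes> a = a \<otimes> s"
    and g: "g \<in> generate G S"
  shows "g \<otimes> a = a \<otimes> g"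
  using g
proof (induction rule: generate.induct)
  case one then show ?case using a by simp
next
  case (incl h) then show ?case using c by blast
next
  case (inv h)
  then have h: "h \<in> carrier G" and e: "h \<otimes> a = a \<otimes> h" using S c by auto
  have "inv h \<otimes> a = inv h \<otimes> (a \<otimes> h) \<otimes> inv h"
    using h a by (simp add: m_assoc)
  also have "\<dots> = inv h \<otimes> (h \<otimes> a) \<otimes> inv h" using e by simp
  also have "\<dots> = a \<otimes> inv h" using h a by (simp add: m_assoc[symmetric])
  finally show ?case .
next
  case (eng h1 h2)
  have h1: "h1 \<in> carrier G" and h2: "h2 \<in> carrier G"
    using eng(1,2) generate_in_carrier[OF S] by auto
  have "h1 \<otimes> h2 \<otimes> a = h1 \<otimes> (a \<otimes> h2)" using eng h1 h2 a by (simp add: m_assoc)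
  also have "\<dots> = (h1 \<otimes> a) \<otimes> h2" using h1 h2 a by (simp add: m_assoc)
  also have "\<dots> = a \<otimes> (h1 \<otimes> h2)" using eng h1 h2 a by (simp add: m_assoc)
  finally show ?case .
qed

lemma (in group) commute_generate2:
  assumes S: "S \<subseteq> carrier G" and T: "T \<subseteq> carrier G"
    and c: "\<forall>s\<in>S. \<forall>t\<in>T. s \<otimes> t = t \<otimes> s"
    and a: "a \<in> generate G S" and b: "b \<in> generate G T"
  shows "a \<otimes> b = b \<otimes> a"
proof -
  have a': "a \<in> carrier G" using a generate_in_carrier[OF S] by auto
  have "\<forall>t\<in>T. t \<otimes> a = a \<otimes> t"
    using commute_generate[OF _ S _ a] c T by (metis subsetD)
  then show ?thesis using commute_generate[OF a' T _ b] by simp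
qed

lemma (in group) pow_in_generate:
  assumes a: "a \<in> carrier G" shows "a [^] (n::nat) \<in> generate G {a}"
proof (induction n)
  case 0 then show ?case using generate.one[of G "{a}"] by simp
next
  case (Suc n) then show ?case using generate.eng[OF Suc generate.incl[of a "{a}" G]] by simp
qed

lemma (in group) conj_pow:
  assumes a: "a \<in> carrier G" and b: "b \<in> carrier G" and z: "z \<in> carrier G"
    and e: "a \<otimes> b \<otimes> inv a = z \<otimes> b" and za: "z \<otimes> a = a \<otimes> z"
  shows "a [^] (n::nat) \<otimes> b \<otimes> inv (a [^] n) = z [^] n \<otimes> b"
proof (induction n)
  case 0 then show ?case using b by simp
next
  case (Suc n)
  have zan: "a [^] n \<otimes> z = z \<otimes> a [^] n"
    using commute_generate[OF z _ _ pow_in_generate[OF a]] a za by auto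
  have "a [^] Suc n \<otimes> b \<otimes> inv (a [^] Suc n) = a [^] n \<otimes> (a \<otimes> b \<otimes> inv a) \<otimes> inv (a [^] n)"
    using a b by (simp add: m_assoc inv_mult_group)
  also have "\<dots> = (a [^] n \<otimes> z) \<otimes> b \<otimes> inv (a [^] n)" using e a b z by (simp add: m_assoc)
  also have "\<dots> = z \<otimes> (a [^] n \<otimes> b \<otimes> inv (a [^] n))" using zan a b z by (simp add: m_assoc)
  also have "\<dots> = z [^] Suc n \<otimes> b" using Suc a b z by (simp add: m_assoc[symmetric]) (metis nat_pow_Suc nat_pow_Suc2)
  finally show ?case .
qed


lemma sqfree_coprime_nat:
  assumes "squarefree ((a::nat) * b)" shows "coprime a b"
proof -
  have "(gcd a b)^2 dvd a * b" by (simp add: power2_eq_square mult_dvd_mono)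
  then have "gcd a b dvd 1" using squarefreeD[OF assms] by blast
  then show ?thesis by (simp add: coprime_iff_gcd_eq_1)
qed

lemma (in group) prod_card_dvd:
  assumes fin: "finite (carrier G)" and A: "subgroup A G" and B: "subgroup B G"
    and c: "\<forall>a\<in>A. \<forall>b\<in>B. a \<otimes> b = b \<otimes> a" and i: "A \<inter> B \<subseteq> {\<one>}"
  shows "card A * card B dvd order G"
proof -
  note Ac = subgroup.subset[OF A] and Bc = subgroup.subset[OF B]
  define S where "S = A <#> B"
  have S_eq: "S = (\<lambda>(a,b). a \<otimes> b) ` (A \<times> B)"
    unfolding S_def set_mult_def by auto
  have sub: "subgroup S G"
  proof (rule subgroup.intro)
    show "S \<subseteq> carrier G" unfolding S_eq using Ac Bc by auto
    show "\<one> \<in> S" unfolding S_eq using subgroup.one_closed[OF A] subgroup.one_closed[OF B]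
      by (auto intro!: image_eqI[of _ _ "(\<one>,\<one>)"])
  next
    fix x y assume "x \<in> S" "y \<in> S"
    then obtain a b a' b' where ab: "a \<in> A" "b \<in> B" "a' \<in> A" "b' \<in> B" "x = a \<otimes> b" "y = a' \<otimes> b'"
      unfolding S_eq by auto
    have car: "a \<in> carrier G" "b \<in> carrier G" "a' \<in> carrier G" "b' \<in> carrier G" using ab Ac Bc by auto
    have "x \<otimes> y = a \<otimes> (b \<otimes> a') \<otimes> b'" using ab car by (simp add: m_assoc)
    also have "\<dots> = a \<otimes> (a' \<otimes> b) \<otimes> b'" using c ab by metis
    also have "\<dots> = (a \<otimes> a') \<otimes> (b \<otimes> b')" using car by (simp add: m_assoc)
    finally show "x \<otimes> y \<in> S" unfolding S_eq
      using ab subgroup.m_closed[OF A] subgroup.m_closed[OF B] by auto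
  next
    fix x assume "x \<in> S"
    then obtain a b where ab: "a \<in> A" "b \<in> B" "x = a \<otimes> b" unfolding S_eq by auto
    have car: "a \<in> carrier G" "b \<in> carrier G" using ab Ac Bc by auto
    have "inv x = inv b \<otimes> inv a" using ab car by (simp add: inv_mult_group)
    also have "\<dots> = inv a \<otimes> inv b"
      using c subgroup.m_inv_closed[OF A ab(1)] subgroup.m_inv_closed[OF B ab(2)] by metis
    finally show "inv x \<in> S" unfolding S_eq
      using ab subgroup.m_inv_closed[OF A] subgroup.m_inv_closed[OF B] by auto
  qed
  have inj: "inj_on (\<lambda>(a,b). a \<otimes> b) (A \<times> B)"
  proof (rule inj_onI, clarify)
    fix a b a' b' assume ab: "a \<in> A" "b \<in> B" "a' \<in> A" "b' \<in> B" and e: "a \<otimes> b = a' \<otimes> b'"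
    have car: "a \<in> carrier G" "b \<in> carrier G" "a' \<in> carrier G" "b' \<in> carrier G" using ab Ac Bc by auto
    have e2: "inv a' \<otimes> a = b' \<otimes> inv b"
    proof -
      have "inv a' \<otimes> a = inv a' \<otimes> (a \<otimes> b) \<otimes> inv b" using car by (simp add: m_assoc)
      also have "\<dots> = inv a' \<otimes> (a' \<otimes> b') \<otimes> inv b" using e by simp
      also have "\<dots> = b' \<otimes> inv b" using car by (simp add: m_assoc[symmetric])
      finally show ?thesis .
    qed
    have "inv a' \<otimes> a \<in> A" by (rule subgroup.m_closed[OF A subgroup.m_inv_closed[OF A ab(3)] ab(1)])
    moreover have "b' \<otimes> inv b \<in> B" by (rule subgroup.m_closed[OF B ab(4) subgroup.m_inv_closed[OF B ab(2)]])
    ultimately have "inv a' \<otimes> a \<in> A \<inter> B" using e2 by (metis IntI)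
    then have e3: "inv a' \<otimes> a = \<one>" using i by blast
    have "a = a' \<otimes> (inv a' \<otimes> a)" using car by (simp add: m_assoc[symmetric])
    then have aa: "a = a'" using e3 car by simp
    then have "b = b'" using e car by simp
    then show "a = a' \<and> b = b'" using aa by simp
  qed
  have "card S = card (A \<times> B)" unfolding S_eq by (rule card_image[OF inj])
  also have "\<dots> = card A * card B" by (rule card_cartesian_product)
  finally have "card S = card A * card B" .
  moreover have "card S dvd order G"
    unfolding lagrange[OF sub, symmetric] by (rule dvd_triv_right)
  ultimately show ?thesis by simp
qed

lemma (in group) sqfree_comm:
  assumes fin: "finite (carrier G)" and sf: "squarefree (order G)"
    and x: "x \<in> carrier G" and y: "y \<in> carrier G"
    and cx: "(x \<otimes> y \<otimes> inv x \<otimes> inv y) \<otimes> x = x \<otimes> (x \<otimes> y \<otimes> inv x \<otimes> inv y)"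
    and cy: "(x \<otimes> y \<otimes> inv x \<otimes> inv y) \<otimes> y = y \<otimes> (x \<otimes> y \<otimes> inv x \<otimes> inv y)"
  shows "x \<otimes> y \<otimes> inv x \<otimes> inv y = \<one>"
proof -
  define c where "c = x \<otimes> y \<otimes> inv x \<otimes> inv y"
  have c: "c \<in> carrier G" unfolding c_def using x y by simp
  have e: "x \<otimes> y \<otimes> inv x = c \<otimes> y" unfolding c_def using x y by (simp add: m_assoc)
  have cx': "c \<otimes> x = x \<otimes> c" and cy': "c \<otimes> y = y \<otimes> c" using cx cy c_def by auto
  have P: "x [^] (n::nat) \<otimes> y \<otimes> inv (x [^] n) = c [^] n \<otimes> y" for n
    using conj_pow[OF x y c e cx'] .
  define m where "m = ord x"
  have m1: "m \<ge> 1" unfolding m_def using ord_ge_1[OF fin x] .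
  have "c [^] m \<otimes> y = y" using P[of m] x y unfolding m_def by simp
  then have "c [^] m = \<one>" using c y by (metis l_one nat_pow_closed one_closed r_cancel)
  then have dm: "ord c dvd m" using pow_eq_id[OF c] by simp
  define d where "d = ord c"
  define e' where "e' = m div d"
  have mde: "m = d * e'" unfolding e'_def d_def using dm by simp
  have sqm: "squarefree m" using squarefree_mono[OF _ sf] ord_dvd_group_order[OF x] m_def by simp
  have cop: "coprime d e'" using sqfree_coprime_nat sqm mde by simp
  have e0: "e' \<noteq> 0" using mde m1 by auto
  define x1 where "x1 = x [^] e'"
  have x1: "x1 \<in> carrier G" unfolding x1_def using x by simp
  have ordx1: "ord x1 = d" unfolding x1_def using ord_pow[OF x _ e0] mde e0 m_def by simp
  define A where "A = generate G {x1}"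
  define B where "B = generate G {c}"
  have cardA: "card A = d" using generate_pow_card[OF x1] ordx1 A_def by simp
  have cardB: "card B = d" using generate_pow_card[OF c] d_def B_def by simp
  have cx1: "c \<otimes> x1 = x1 \<otimes> c"
  proof -
    have "x1 \<otimes> c = c \<otimes> x1"
      unfolding x1_def by (rule commute_generate[OF c _ _ pow_in_generate[OF x]]) (use x cx' in auto)
    then show ?thesis by simp
  qed
  have comm: "\<forall>a\<in>A. \<forall>b\<in>B. a \<otimes> b = b \<otimes> a"
  proof (intro ballI)
    fix a b assume "a \<in> A" "b \<in> B"
    then show "a \<otimes> b = b \<otimes> a"
      unfolding A_def B_def by (rule commute_generate2[rotated 3]) (use x1 c cx1 in auto)
  qed
  have By: "\<forall>b\<in>B. b \<otimes> y = y \<otimes> b"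
  proof
    fix b assume "b \<in> B" then show "b \<otimes> y = y \<otimes> b"
      using commute_generate[OF y, of "{c}" b] c cy' B_def by auto
  qed
  have int: "A \<inter> B \<subseteq> {\<one>}"
  proof
    fix z assume z: "z \<in> A \<inter> B"
    then obtain k::nat where k: "z = x1 [^] k"
      using generate_pow_on_finite_carrier[OF fin x1] unfolding A_def by auto
    have zc: "z \<in> carrier G" using k x1 by simp
    have "z \<otimes> y \<otimes> inv z = y" using By z zc y by (simp add: m_assoc)
    moreover have "z \<otimes> y \<otimes> inv z = c [^] (e' * k) \<otimes> y"
      using P[of "e' * k"] k unfolding x1_def using x by (simp add: nat_pow_pow)
    ultimately have "c [^] (e' * k) = \<one>" using c y by (metis l_one nat_pow_closed one_closed r_cancel)
    then have "d dvd e' * k" using pow_eq_id[OF c] d_def by simp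
    then have "d dvd k" using cop by (simp add: coprime_dvd_mult_right_iff)
    then have "z = \<one>" using k pow_eq_id[OF x1] ordx1 by simp
    then show "z \<in> {\<one>}" by simp
  qed
  have "d * d dvd order G"
    using prod_card_dvd[OF fin _ _ comm int] generate_is_subgroup x1 c cardA cardB
    unfolding A_def B_def by simp
  then have "d dvd 1" using squarefreeD[OF sf, of d] by (simp add: power2_eq_square)
  then have "d = 1" by simp
  then show ?thesis using ord_eq_1[OF c] d_def c_def by simp
qed

lemma (in group) subgroup_pow_closed:
  assumes A: "subgroup A G" and a: "a \<in> A" shows "a [^] (n::nat) \<in> A"
proof (induction n)
  case 0 then show ?case using subgroup.one_closed[OF A] by simp
next
  case (Suc n) then show ?case using subgroup.m_closed[OF A Suc a] by simp
qed

lemma (in comm_group) sqfree_cyclic: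
  assumes fin: "finite (carrier G)" and sf: "squarefree (order G)"
  shows "\<exists>g\<in>carrier G. carrier G = generate G {g}"
proof -
  have fo: "finite (ord ` carrier G)" "ord ` carrier G \<noteq> {}" using fin by auto
  obtain g where g: "g \<in> carrier G" and gm: "ord g = Max (ord ` carrier G)"
    using Max_in[OF fo] by auto
  have gmax: "\<And>h. h \<in> carrier G \<Longrightarrow> ord h \<le> ord g" using gm fo(1) by simp
  define A where "A = generate G {g}"
  have Asub: "subgroup A G" unfolding A_def using generate_is_subgroup g by simp
  define m where "m = ord g"
  have m1: "m \<ge> 1" unfolding m_def using ord_ge_1[OF fin g] .
  have "carrier G \<subseteq> A"
  proof (rule ccontr)
    assume "\<not> carrier G \<subseteq> A"
    then obtain h where h: "h \<in> carrier G" and hA: "h \<notin> A" by auto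
    define l where "l = ord h"
    have l1: "l \<ge> 1" unfolding l_def using ord_ge_1[OF fin h] .
    have ex: "0 < l \<and> h [^] l \<in> A" using l1 subgroup.one_closed[OF Asub] h l_def by simp
    define j where "j = (LEAST j::nat. 0 < j \<and> h [^] j \<in> A)"
    have jp: "0 < j \<and> h [^] j \<in> A" using LeastI[of "\<lambda>j::nat. 0 < j \<and> h [^] j \<in> A" l] ex unfolding j_def by blast
    have jmin: "\<And>r::nat. 0 < r \<Longrightarrow> h [^] r \<in> A \<Longrightarrow> j \<le> r" unfolding j_def by (simp add: Least_le)
    have dvdj: "j dvd r" if r: "h [^] r \<in> A" for r::nat
    proof -
      define q where "q = r div j"
      define s where "s = r mod j"
      have rq: "r = j * q + s" unfolding q_def s_def by simp
      have hq: "h [^] (j * q) \<in> A" using subgroup_pow_closed[OF Asub, of "h [^] j" q] jp h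
        by (simp add: nat_pow_pow)
      have "h [^] r = h [^] (j * q) \<otimes> h [^] s" using rq h by (simp add: nat_pow_mult)
      then have "h [^] s = inv (h [^] (j * q)) \<otimes> h [^] r" using h by (simp add: m_assoc[symmetric])
      then have "h [^] s \<in> A" using hq r Asub by (simp add: subgroup.m_closed subgroup.m_inv_closed)
      moreover have "s < j" unfolding s_def using jp by simp
      ultimately have "s = 0" using jmin by fastforce
      then show ?thesis using rq by simp
    qed
    have jl: "j dvd l" using dvdj ex by simp
    have "j \<noteq> 1" using jp hA h by auto
    then have j2: "j \<ge> 2" using jp by simp
    define k where "k = l div j"
    have lk: "l = j * k" unfolding k_def using jl by simp
    have k0: "k \<noteq> 0" using lk l1 by auto
    define h1 where "h1 = h [^] k"
    have h1: "h1 \<in> carrier G" unfolding h1_def using h by simp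
    have ordh1: "ord h1 = j" unfolding h1_def using ord_pow[OF h _ k0] lk k0 l_def by simp
    have sql: "squarefree l" using squarefree_mono[OF _ sf] ord_dvd_group_order[OF h] l_def by simp
    have cop: "coprime j k" using sqfree_coprime_nat sql lk by simp
    define B where "B = generate G {h1}"
    have Bsub: "subgroup B G" unfolding B_def using generate_is_subgroup h1 by simp
    have cardA: "card A = m" using generate_pow_card[OF g] m_def A_def by simp
    have cardB: "card B = j" using generate_pow_card[OF h1] ordh1 B_def by simp
    have int: "A \<inter> B \<subseteq> {\<one>}"
    proof
      fix z assume z: "z \<in> A \<inter> B"
      then obtain a::nat where a: "z = h1 [^] a"
        using generate_pow_on_finite_carrier[OF fin h1] unfolding B_def by auto
      have "h [^] (k * a) \<in> A" using z a h unfolding h1_def by (simp add: nat_pow_pow)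
      then have "j dvd k * a" using dvdj by simp
      then have "j dvd a" using cop by (simp add: coprime_dvd_mult_right_iff)
      then have "z = \<one>" using a pow_eq_id[OF h1] ordh1 by simp
      then show "z \<in> {\<one>}" by simp
    qed
    have comm: "\<forall>a\<in>A. \<forall>b\<in>B. a \<otimes> b = b \<otimes> a"
      using subgroup.subset[OF Asub] subgroup.subset[OF Bsub] m_comm by blast
    have "m * j dvd order G" using prod_card_dvd[OF fin Asub Bsub comm int] cardA cardB by simp
    then have copmj: "coprime m j"
      using sqfree_coprime_nat squarefree_mono[OF _ sf] by blast
    define ob where "ob = ord (g \<otimes> h1)"
    have gh: "g \<otimes> h1 \<in> carrier G" using g h1 by simp
    have o1: "ob \<ge> 1" unfolding ob_def using ord_ge_1[OF fin gh] .
    have "g [^] ob \<otimes> h1 [^] ob = \<one>"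
      using pow_mult_distrib[OF m_comm[OF g h1] g h1, of ob] pow_ord_eq_1[OF gh] ob_def by simp
    then have go: "g [^] ob = inv (h1 [^] ob)" using g h1 by (metis inv_equality nat_pow_closed inv_inv) 
    have "g [^] ob \<in> A" unfolding A_def using pow_in_generate[OF g] .
    moreover have "inv (h1 [^] ob) \<in> B" unfolding B_def
      using generate_m_inv_closed[of "{h1}"] pow_in_generate[OF h1] h1 by simp
    ultimately have "g [^] ob \<in> A \<inter> B" using go by (metis IntI)
    then have "g [^] ob = \<one>" using int by blast
    moreover then have "h1 [^] ob = \<one>" using go h1 by (metis inv_inv inv_one nat_pow_closed)
    ultimately have "m dvd ob" "j dvd ob" using pow_eq_id g h1 m_def ordh1 by auto
    then have "m * j dvd ob" using copmj by (simp add: divides_mult)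
    then have "m * j \<le> ob" using o1 by (simp add: dvd_imp_le)
    moreover have "ob \<le> m" using gmax[OF gh] ob_def m_def by simp
    moreover have "m * 2 \<le> m * j" using j2 by simp
    ultimately show False using m1 by linarith
  qed
  then have "carrier G = A" using generate_incl[of "{g}"] g A_def by auto
  then show ?thesis using g A_def by blast
qed

declare lower_central.simps(2)[simp del]

lemma (in group) cancel_simps [simp]:
  "x \<in> carrier G \<Longrightarrow> y \<in> carrier G \<Longrightarrow> inv x \<otimes> (x \<otimes> y) = y"
  "x \<in> carrier G \<Longrightarrow> y \<in> carrier G \<Longrightarrow> x \<otimes> (inv x \<otimes> y) = y"
  by (simp_all add: m_assoc[symmetric])

lemma (in group) comm_from_one:
  assumes x: "x \<in> carrier G" and y: "y \<in> carrier G" and e: "x \<otimes> y \<otimes> inv x \<otimes> inv y = \<one>"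
  shows "x \<otimes> y = y \<otimes> x"
proof -
  have "x \<otimes> y = (x \<otimes> y \<otimes> inv x \<otimes> inv y) \<otimes> (y \<otimes> x)" using x y by (simp add: m_assoc)
  then show ?thesis using e x y by simp
qed

lemma (in group) one_from_comm:
  assumes x: "x \<in> carrier G" and y: "y \<in> carrier G" and e: "x \<otimes> y = y \<otimes> x"
  shows "x \<otimes> y \<otimes> inv x \<otimes> inv y = \<one>"
  using x y e by (simp add: m_assoc)

lemma (in group) sqfree_comm_sub:
  assumes H: "subgroup H G" and fin: "finite H" and sf: "squarefree (card H)"
    and x: "x \<in> H" and y: "y \<in> H"
    and cx: "(x \<otimes> y \<otimes> inv x \<otimes> inv y) \<otimes> x = x \<otimes> (x \<otimes> y \<otimes> inv x \<otimes> inv y)"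
    and cy: "(x \<otimes> y \<otimes> inv x \<otimes> inv y) \<otimes> y = y \<otimes> (x \<otimes> y \<otimes> inv x \<otimes> inv y)"
  shows "x \<otimes> y \<otimes> inv x \<otimes> inv y = \<one>"
proof -
  interpret Hs: group "G\<lparr>carrier := H\<rparr>" using subgroup_imp_group[OF H] .
  have "x \<otimes>\<^bsub>G\<lparr>carrier := H\<rparr>\<^esub> y \<otimes>\<^bsub>G\<lparr>carrier := H\<rparr>\<^esub> inv\<^bsub>G\<lparr>carrier := H\<rparr>\<^esub> x \<otimes>\<^bsub>G\<lparr>carrier := H\<rparr>\<^esub> inv\<^bsub>G\<lparr>carrier := H\<rparr>\<^esub> y = \<one>\<^bsub>G\<lparr>carrier := H\<rparr>\<^esub>"
    apply (rule Hs.sqfree_comm)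
    using fin sf x y cx cy H by (simp_all add: order_def)
  then show ?thesis using H x y by simp
qed

definition nilp_normals :: "('g, 'b) monoid_scheme \<Rightarrow> 'g set set" where
  "nilp_normals G = {N. N \<lhd> G \<and> nilpotent_group (G\<lparr>carrier := N\<rparr>)}"

lemma fitting_alt: "fitting_subgroup G = generate G (\<Union>(nilp_normals G))"
  unfolding fitting_subgroup_def nilp_normals_def by simp

lemma (in group) fit_normal: "fitting_subgroup G \<lhd> G"
  unfolding fitting_alt
proof (rule normal_generateI)
  show "\<Union> (nilp_normals G) \<subseteq> carrier G"
  proof
    fix x assume "x \<in> \<Union> (nilp_normals G)"
    then obtain N where N: "N \<lhd> G" "x \<in> N" unfolding nilp_normals_def by auto
    then show "x \<in> carrier G" using subgroup.mem_carrier[OF normal_imp_subgroup[OF N(1)]] by simp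
  qed
next
  fix h g assume h: "h \<in> \<Union> (nilp_normals G)" and g: "g \<in> carrier G"
  then obtain N where N: "N \<in> nilp_normals G" "h \<in> N" by auto
  then have "N \<lhd> G" unfolding nilp_normals_def by simp
  then have "g \<otimes> h \<otimes> inv g \<in> N" using normal.inv_op_closed2 g N(2) by metis
  then show "g \<otimes> h \<otimes> inv g \<in> \<Union> (nilp_normals G)" using N(1) by blast
qed

lemma (in group) comm_set_consistent:
  assumes N: "subgroup N G" and HN: "H \<subseteq> N" and KN: "K \<subseteq> N"
  shows "{h \<otimes>\<^bsub>G\<lparr>carrier := N\<rparr>\<^esub> k \<otimes>\<^bsub>G\<lparr>carrier := N\<rparr>\<^esub> inv\<^bsub>G\<lparr>carrier := N\<rparr>\<^esub> h \<otimes>\<^bsub>G\<lparr>carrier := N\<rparr>\<^esub> inv\<^bsub>G\<lparr>carrier := N\<rparr>\<^esub> k | h k. h \<in> H \<and> k \<in> K}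
      = {h \<otimes> k \<otimes> inv h \<otimes> inv k | h k. h \<in> H \<and> k \<in> K}"
proof (rule Set.set_eqI, rule iffI)
  fix x assume "x \<in> {h \<otimes>\<^bsub>G\<lparr>carrier := N\<rparr>\<^esub> k \<otimes>\<^bsub>G\<lparr>carrier := N\<rparr>\<^esub> inv\<^bsub>G\<lparr>carrier := N\<rparr>\<^esub> h \<otimes>\<^bsub>G\<lparr>carrier := N\<rparr>\<^esub> inv\<^bsub>G\<lparr>carrier := N\<rparr>\<^esub> k | h k. h \<in> H \<and> k \<in> K}"
  then obtain h k where hk: "h \<in> H" "k \<in> K" and x: "x = h \<otimes>\<^bsub>G\<lparr>carrier := N\<rparr>\<^esub> k \<otimes>\<^bsub>G\<lparr>carrier := N\<rparr>\<^esub> inv\<^bsub>G\<lparr>carrier := N\<rparr>\<^esub> h \<otimes>\<^bsub>G\<lparr>carrier := N\<rparr>\<^esub> inv\<^bsub>G\<lparr>carrier := N\<rparr>\<^esub> k" by blast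
  have "x = h \<otimes> k \<otimes> inv h \<otimes> inv k" proof -
    have hN: "h \<in> N" "k \<in> N" using hk HN KN by auto
    show ?thesis using x by (simp add: m_inv_consistent[OF N hN(1)] m_inv_consistent[OF N hN(2)])
  qed
  then show "x \<in> {h \<otimes> k \<otimes> inv h \<otimes> inv k | h k. h \<in> H \<and> k \<in> K}" using hk by blast
next
  fix x assume "x \<in> {h \<otimes> k \<otimes> inv h \<otimes> inv k | h k. h \<in> H \<and> k \<in> K}"
  then obtain h k where hk: "h \<in> H" "k \<in> K" and x: "x = h \<otimes> k \<otimes> inv h \<otimes> inv k" by blast
  have "x = h \<otimes>\<^bsub>G\<lparr>carrier := N\<rparr>\<^esub> k \<otimes>\<^bsub>G\<lparr>carrier := N\<rparr>\<^esub> inv\<^bsub>G\<lparr>carrier := N\<rparr>\<^esub> h \<otimes>\<^bsub>G\<lparr>carrier := N\<rparr>\<^esub> inv\<^bsub>G\<lparr>carrier := N\<rparr>\<^esub> k" proof -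
    have hN: "h \<in> N" "k \<in> N" using hk HN KN by auto
    show ?thesis using x by (simp add: m_inv_consistent[OF N hN(1)] m_inv_consistent[OF N hN(2)])
  qed
  then show "x \<in> {h \<otimes>\<^bsub>G\<lparr>carrier := N\<rparr>\<^esub> k \<otimes>\<^bsub>G\<lparr>carrier := N\<rparr>\<^esub> inv\<^bsub>G\<lparr>carrier := N\<rparr>\<^esub> h \<otimes>\<^bsub>G\<lparr>carrier := N\<rparr>\<^esub> inv\<^bsub>G\<lparr>carrier := N\<rparr>\<^esub> k | h k. h \<in> H \<and> k \<in> K}" using hk by blast
qed

lemma comm_closed_sub:
  assumes G: "group G" and N: "subgroup N G" and L: "L \<subseteq> N"
  shows "{h \<otimes>\<^bsub>G\<^esub> g \<otimes>\<^bsub>G\<^esub> inv\<^bsub>G\<^esub> h \<otimes>\<^bsub>G\<^esub> inv\<^bsub>G\<^esub> g | h g. h \<in> L \<and> g \<in> N} \<subseteq> N"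
proof
  fix x assume "x \<in> {h \<otimes>\<^bsub>G\<^esub> g \<otimes>\<^bsub>G\<^esub> inv\<^bsub>G\<^esub> h \<otimes>\<^bsub>G\<^esub> inv\<^bsub>G\<^esub> g | h g. h \<in> L \<and> g \<in> N}"
  then obtain h g where x: "x = h \<otimes>\<^bsub>G\<^esub> g \<otimes>\<^bsub>G\<^esub> inv\<^bsub>G\<^esub> h \<otimes>\<^bsub>G\<^esub> inv\<^bsub>G\<^esub> g" and hg: "h \<in> N" "g \<in> N"
    using L by blast
  show "x \<in> N" unfolding x
    by (intro subgroup.m_closed[OF N] subgroup.m_inv_closed[OF N] hg)
qed

lemma (in group) lc_step:
  assumes N: "subgroup N G" and Lk: "lower_central (G\<lparr>carrier := N\<rparr>) k \<subseteq> N"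
  shows "lower_central (G\<lparr>carrier := N\<rparr>) (Suc k) = generate G
      {h \<otimes> g \<otimes> inv h \<otimes> inv g | h g. h \<in> lower_central (G\<lparr>carrier := N\<rparr>) k \<and> g \<in> N}
    \<and> lower_central (G\<lparr>carrier := N\<rparr>) (Suc k) \<subseteq> N"
proof -
  let ?L = "lower_central (G\<lparr>carrier := N\<rparr>) k"
  have S: "{h \<otimes> g \<otimes> inv h \<otimes> inv g | h g. h \<in> ?L \<and> g \<in> N} \<subseteq> N"
    by (rule comm_closed_sub[OF is_group N Lk])
  have e1: "lower_central (G\<lparr>carrier := N\<rparr>) (Suc k) = generate (G\<lparr>carrier := N\<rparr>)
     {h \<otimes>\<^bsub>G\<lparr>carrier := N\<rparr>\<^esub> g \<otimes>\<^bsub>G\<lparr>carrier := N\<rparr>\<^esub> inv\<^bsub>G\<lparr>carrier := N\<rparr>\<^esub> h \<otimes>\<^bsub>G\<lparr>carrier := N\<rparr>\<^esub> inv\<^bsub>G\<lparr>carrier := N\<rparr>\<^esub> g | h g. h \<in> ?L \<and> g \<in> carrier (G\<lparr>carrier := N\<rparr>)}"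
    by (simp only: lower_central.simps commutator_subgroup_def)
  also have "\<dots> = generate (G\<lparr>carrier := N\<rparr>) {h \<otimes> g \<otimes> inv h \<otimes> inv g | h g. h \<in> ?L \<and> g \<in> N}"
    using comm_set_consistent[OF N Lk, of N] by simp
  also have "\<dots> = generate G {h \<otimes> g \<otimes> inv h \<otimes> inv g | h g. h \<in> ?L \<and> g \<in> N}"
    by (rule generate_consistent[OF S N])
  finally have e: "lower_central (G\<lparr>carrier := N\<rparr>) (Suc k) = generate G {h \<otimes> g \<otimes> inv h \<otimes> inv g | h g. h \<in> ?L \<and> g \<in> N}" .
  moreover have "generate G {h \<otimes> g \<otimes> inv h \<otimes> inv g | h g. h \<in> ?L \<and> g \<in> N} \<subseteq> N"
    by (rule generate_subgroup_incl[OF S N])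
  ultimately show ?thesis by blast
qed

lemma (in group) lc_sub:
  assumes N: "subgroup N G"
  shows "lower_central (G\<lparr>carrier := N\<rparr>) k \<subseteq> N"
proof (induction k)
  case 0 then show ?case by simp
next
  case (Suc k) then show ?case using lc_step[OF N Suc] by blast
qed

lemma (in group) lc_formula:
  assumes N: "subgroup N G"
  shows "lower_central (G\<lparr>carrier := N\<rparr>) (Suc k) = generate G
      {h \<otimes> g \<otimes> inv h \<otimes> inv g | h g. h \<in> lower_central (G\<lparr>carrier := N\<rparr>) k \<and> g \<in> N}"
  using lc_step[OF N lc_sub[OF N]] by blast

lemma (in group) gen_sub_one:
  assumes "S \<subseteq> {\<one>}" shows "generate G S = {\<one>}"
  using mono_generate[OF assms] generate_one generate.one[of G S] by auto

lemma (in group) nilp_abelian: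
  assumes fin: "finite (carrier G)" and sf: "squarefree (card H)" and H: "subgroup H G"
    and N: "subgroup N G" and NH: "N \<subseteq> H" and nil: "nilpotent_group (G\<lparr>carrier := N\<rparr>)"
  shows "\<forall>x\<in>N. \<forall>y\<in>N. x \<otimes> y = y \<otimes> x"
proof -
  let ?L = "lower_central (G\<lparr>carrier := N\<rparr>)"
  have finH: "finite H" using fin subgroup.subset[OF H] finite_subset by blast
  obtain n where n: "?L n = {\<one>}" using nil unfolding nilpotent_group_def by auto
  have Nc: "N \<subseteq> carrier G" using subgroup.subset[OF N] .
  have step: "?L (Suc k) = {\<one>}" if A: "?L (Suc (Suc k)) = {\<one>}" for k
  proof -
    have Lsub: "?L (Suc k) \<subseteq> N" "?L k \<subseteq> N" using lc_sub[OF N] by auto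
    have comm: "z \<otimes> g = g \<otimes> z" if z: "z \<in> ?L (Suc k)" and g: "g \<in> N" for z g
    proof -
      have "z \<otimes> g \<otimes> inv z \<otimes> inv g \<in> ?L (Suc (Suc k))"
        unfolding lc_formula[OF N, of "Suc k"] by (rule generate.incl) (use z g in blast)
      then have "z \<otimes> g \<otimes> inv z \<otimes> inv g = \<one>" using A by simp
      then show ?thesis using comm_from_one z g Lsub Nc by blast
    qed
    have gens: "{h \<otimes> g \<otimes> inv h \<otimes> inv g | h g. h \<in> ?L k \<and> g \<in> N} \<subseteq> {\<one>}"
    proof
      fix x assume "x \<in> {h \<otimes> g \<otimes> inv h \<otimes> inv g | h g. h \<in> ?L k \<and> g \<in> N}"
      then obtain h g where hg: "h \<in> ?L k" "g \<in> N" and x: "x = h \<otimes> g \<otimes> inv h \<otimes> inv g" by blast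
      have xL: "x \<in> ?L (Suc k)"
        unfolding lc_formula[OF N, of k] x by (rule generate.incl) (use hg in blast)
      have hN: "h \<in> N" using hg Lsub by blast
      have "h \<otimes> g \<otimes> inv h \<otimes> inv g = \<one>"
        apply (rule sqfree_comm_sub[OF H finH sf])
        using hN hg NH comm[OF xL hN] comm[OF xL hg(2)] x by auto
      then show "x \<in> {\<one>}" using x by simp
    qed
    show ?thesis unfolding lc_formula[OF N, of k] using gen_sub_one[OF gens] .
  qed
  have up: "?L (Suc n) = {\<one>}"
  proof -
    have "{h \<otimes> g \<otimes> inv h \<otimes> inv g | h g. h \<in> ?L n \<and> g \<in> N} \<subseteq> {\<one>}"
      using n Nc by auto
    then show ?thesis unfolding lc_formula[OF N, of n] by (rule gen_sub_one)
  qed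
  have down: "\<forall>i. i \<le> n \<longrightarrow> ?L (Suc (n - i)) = {\<one>}"
  proof (intro allI)
    fix i show "i \<le> n \<longrightarrow> ?L (Suc (n - i)) = {\<one>}"
    proof (induction i)
      case 0 then show ?case using up by simp
    next
      case (Suc i)
      show ?case
      proof
        assume si: "Suc i \<le> n"
        then have e: "n - i = Suc (n - Suc i)" by simp
        have "?L (Suc (Suc (n - Suc i))) = {\<one>}" using Suc si e by simp
        then show "?L (Suc (n - Suc i)) = {\<one>}" by (rule step)
      qed
    qed
  qed
  then have L1: "?L (Suc 0) = {\<one>}" by (metis diff_self_eq_0 order_refl)
  show ?thesis
  proof (intro ballI)
    fix x y assume xy: "x \<in> N" "y \<in> N"
    have L0: "?L 0 = N" by simp
    have "x \<otimes> y \<otimes> inv x \<otimes> inv y \<in> ?L (Suc 0)"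
      unfolding lc_formula[OF N, of 0] L0 by (rule generate.incl) (use xy in blast)
    then have "x \<otimes> y \<otimes> inv x \<otimes> inv y = \<one>" using L1 by simp
    then show "x \<otimes> y = y \<otimes> x" using comm_from_one xy Nc by blast
  qed
qed

lemma (in group) conj_mult:
  assumes "g \<in> carrier G" "a \<in> carrier G" "b \<in> carrier G"
  shows "g \<otimes> (a \<otimes> b) \<otimes> inv g = (g \<otimes> a \<otimes> inv g) \<otimes> (g \<otimes> b \<otimes> inv g)"
  using assms by (simp add: m_assoc)

lemma (in group) conj_inv:
  assumes "g \<in> carrier G" "a \<in> carrier G"
  shows "g \<otimes> inv a \<otimes> inv g = inv (g \<otimes> a \<otimes> inv g)"
  using assms by (simp add: m_assoc inv_mult_group)

lemma (in group) conj_comm: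
  assumes g: "g \<in> carrier G" and a: "a \<in> carrier G" and b: "b \<in> carrier G"
  shows "g \<otimes> (a \<otimes> b \<otimes> inv a \<otimes> inv b) \<otimes> inv g =
    (g \<otimes> a \<otimes> inv g) \<otimes> (g \<otimes> b \<otimes> inv g) \<otimes> inv (g \<otimes> a \<otimes> inv g) \<otimes> inv (g \<otimes> b \<otimes> inv g)"
proof -
  have "g \<otimes> (a \<otimes> b \<otimes> inv a \<otimes> inv b) \<otimes> inv g =
    (g \<otimes> a \<otimes> inv g) \<otimes> (g \<otimes> b \<otimes> inv g) \<otimes> (g \<otimes> inv a \<otimes> inv g) \<otimes> (g \<otimes> inv b \<otimes> inv g)"
    using g a b by (simp add: m_assoc)
  then show ?thesis using conj_inv g a b by simp
qed

lemma (in group) conj_pow_hom: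
  assumes g: "g \<in> carrier G" and a: "a \<in> carrier G"
  shows "g \<otimes> a [^] (n::nat) \<otimes> inv g = (g \<otimes> a \<otimes> inv g) [^] n"
proof (induction n)
  case 0 then show ?case using g by simp
next
  case (Suc n)
  have "g \<otimes> a [^] Suc n \<otimes> inv g = g \<otimes> (a [^] n \<otimes> a) \<otimes> inv g" by simp
  also have "\<dots> = (g \<otimes> a [^] n \<otimes> inv g) \<otimes> (g \<otimes> a \<otimes> inv g)" using conj_mult g a by simp
  finally show ?case using Suc by simp
qed

lemma (in group) fit_sub: "subgroup (fitting_subgroup G) G"
  using normal_imp_subgroup[OF fit_normal] .

lemma (in group) nilp_sub_fit: "N \<in> nilp_normals G \<Longrightarrow> N \<subseteq> fitting_subgroup G"
  unfolding fitting_alt using generate.incl[of _ "\<Union>(nilp_normals G)" G] by blast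

lemma (in group) fit_abelian:
  assumes fin: "finite (carrier G)" and sf: "squarefree (card (fitting_subgroup G))"
  shows "\<forall>x\<in>fitting_subgroup G. \<forall>y\<in>fitting_subgroup G. x \<otimes> y = y \<otimes> x"
proof -
  let ?F = "fitting_subgroup G"
  let ?U = "\<Union>(nilp_normals G)"
  have F: "subgroup ?F G" by (rule fit_sub)
  have finF: "finite ?F" using fin subgroup.subset[OF F] finite_subset by blast
  have ab: "\<forall>x\<in>N. \<forall>y\<in>N. x \<otimes> y = y \<otimes> x" if N: "N \<in> nilp_normals G" for N
  proof -
    have nN: "N \<lhd> G" "nilpotent_group (G\<lparr>carrier := N\<rparr>)" using N unfolding nilp_normals_def by auto
    show ?thesis by (rule nilp_abelian[OF fin sf F normal_imp_subgroup[OF nN(1)] nilp_sub_fit[OF N] nN(2)])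
  qed
  have Uc: "?U \<subseteq> carrier G"
  proof
    fix x assume "x \<in> ?U"
    then obtain N where N: "N \<lhd> G" "x \<in> N" unfolding nilp_normals_def by auto
    then show "x \<in> carrier G" using subgroup.mem_carrier[OF normal_imp_subgroup[OF N(1)]] by simp
  qed
  have pair: "a \<otimes> b = b \<otimes> a" if a: "a \<in> ?U" and b: "b \<in> ?U" for a b
  proof -
    obtain N1 where N1: "N1 \<in> nilp_normals G" "a \<in> N1" using a by auto
    obtain N2 where N2: "N2 \<in> nilp_normals G" "b \<in> N2" using b by auto
    have n1: "N1 \<lhd> G" and n2: "N2 \<lhd> G" using N1 N2 unfolding nilp_normals_def by auto
    have ac: "a \<in> carrier G" and bc: "b \<in> carrier G" using a b Uc by auto
    define c where "c = a \<otimes> b \<otimes> inv a \<otimes> inv b"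
    have "b \<otimes> inv a \<otimes> inv b \<in> N1"
      using normal.inv_op_closed2[OF n1 bc subgroup.m_inv_closed[OF normal_imp_subgroup[OF n1] N1(2)]] .
    then have c1: "c \<in> N1" unfolding c_def
      using subgroup.m_closed[OF normal_imp_subgroup[OF n1] N1(2)] ac bc by (simp add: m_assoc)
    have "a \<otimes> b \<otimes> inv a \<in> N2" using normal.inv_op_closed2[OF n2 ac N2(2)] .
    then have c2: "c \<in> N2" unfolding c_def
      using subgroup.m_closed[OF normal_imp_subgroup[OF n2] _ subgroup.m_inv_closed[OF normal_imp_subgroup[OF n2] N2(2)]] by simp
    have "c = \<one>" unfolding c_def
      apply (rule sqfree_comm_sub[OF F finF sf])
      using nilp_sub_fit[OF N1(1)] nilp_sub_fit[OF N2(1)] N1(2) N2(2) apply blast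
      using nilp_sub_fit[OF N1(1)] nilp_sub_fit[OF N2(1)] N1(2) N2(2) apply blast
      using ab[OF N1(1)] c1 N1(2) c_def apply simp
      using ab[OF N2(1)] c2 N2(2) c_def apply simp
      done
    then show ?thesis using comm_from_one[OF ac bc] c_def by simp
  qed
  show ?thesis
  proof (intro ballI)
    fix x y assume xy: "x \<in> ?F" "y \<in> ?F"
    have P: "\<forall>s\<in>?U. \<forall>t\<in>?U. s \<otimes> t = t \<otimes> s" using pair by blast
    show "x \<otimes> y = y \<otimes> x"
      by (rule commute_generate2[OF Uc Uc P xy[unfolded fitting_alt]])
  qed
qed

lemma (in group) fit_cyclic:
  assumes fin: "finite (carrier G)" and sf: "squarefree (card (fitting_subgroup G))"
  shows "\<exists>z\<in>fitting_subgroup G. fitting_subgroup G = generate G {z}"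
proof -
  let ?F = "fitting_subgroup G"
  have F: "subgroup ?F G" by (rule fit_sub)
  have finF: "finite ?F" using fin subgroup.subset[OF F] finite_subset by blast
  interpret Fs: group "G\<lparr>carrier := ?F\<rparr>" using subgroup_imp_group[OF F] .
  have cg: "comm_group (G\<lparr>carrier := ?F\<rparr>)"
    by (rule Fs.group_comm_groupI) (use fit_abelian[OF fin sf] in simp)
  obtain z where z: "z \<in> ?F" and e: "?F = generate (G\<lparr>carrier := ?F\<rparr>) {z}"
    using comm_group.sqfree_cyclic[OF cg] finF sf by (auto simp: order_def)
  have "generate (G\<lparr>carrier := ?F\<rparr>) {z} = generate G {z}"
    using generate_consistent[OF _ F, of "{z}"] z by simp
  then show ?thesis using z e by auto
qed

lemma (in group) derived_normal:
  assumes H: "H \<lhd> G" shows "derived G H \<lhd> G"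
  unfolding derived_def
proof (rule normal_generateI)
  have Hc: "H \<subseteq> carrier G" using subgroup.subset[OF normal_imp_subgroup[OF H]] .
  show "derived_set G H \<subseteq> carrier G" using derived_set_in_carrier[OF Hc] .
  fix h g assume h: "h \<in> derived_set G H" and g: "g \<in> carrier G"
  then obtain a b where ab: "a \<in> H" "b \<in> H" and he: "h = a \<otimes> b \<otimes> inv a \<otimes> inv b" by blast
  have ac: "a \<in> carrier G" "b \<in> carrier G" using ab Hc by auto
  have "g \<otimes> h \<otimes> inv g = (g \<otimes> a \<otimes> inv g) \<otimes> (g \<otimes> b \<otimes> inv g) \<otimes> inv (g \<otimes> a \<otimes> inv g) \<otimes> inv (g \<otimes> b \<otimes> inv g)"
    unfolding he using conj_comm[OF g ac] .
  moreover have "g \<otimes> a \<otimes> inv g \<in> H" "g \<otimes> b \<otimes> inv g \<in> H"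
    using normal.inv_op_closed2[OF H g] ab by auto
  ultimately show "g \<otimes> h \<otimes> inv g \<in> derived_set G H" by blast
qed

lemma (in group) derived_pow_normal:
  assumes H: "H \<lhd> G" shows "(derived G ^^ k) H \<lhd> G"
  by (induction k) (simp_all add: H derived_normal)

lemma (in group) centraliser_normal:
  assumes F: "F \<lhd> G" shows "centraliser G F \<lhd> G"
proof -
  have Fc: "F \<subseteq> carrier G" using subgroup.subset[OF normal_imp_subgroup[OF F]] .
  have sub: "subgroup (centraliser G F) G"
  proof (rule subgroup.intro)
    show "centraliser G F \<subseteq> carrier G" unfolding centraliser_def by auto
    show "\<one> \<in> centraliser G F" unfolding centraliser_def using Fc by auto
  next
    fix x y assume x: "x \<in> centraliser G F" and y: "y \<in> centraliser G F"
    have xc: "x \<in> carrier G" and yc: "y \<in> carrier G" using x y unfolding centraliser_def by auto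
    show "x \<otimes> y \<in> centraliser G F" unfolding centraliser_def
    proof (intro CollectI conjI ballI)
      show "x \<otimes> y \<in> carrier G" using xc yc by simp
      fix h assume h: "h \<in> F"
      have hc: "h \<in> carrier G" using h Fc by auto
      have "x \<otimes> y \<otimes> h = x \<otimes> (y \<otimes> h)" using xc yc hc by (simp add: m_assoc)
      also have "\<dots> = x \<otimes> (h \<otimes> y)" using y h unfolding centraliser_def by simp
      also have "\<dots> = (x \<otimes> h) \<otimes> y" using xc yc hc by (simp add: m_assoc)
      also have "\<dots> = (h \<otimes> x) \<otimes> y" using x h unfolding centraliser_def by simp
      also have "\<dots> = h \<otimes> (x \<otimes> y)" using xc yc hc by (simp add: m_assoc)
      finally show "x \<otimes> y \<otimes> h = h \<otimes> (x \<otimes> y)" .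
    qed
  next
    fix x assume x: "x \<in> centraliser G F"
    have xc: "x \<in> carrier G" using x unfolding centraliser_def by auto
    show "inv x \<in> centraliser G F" unfolding centraliser_def
    proof (intro CollectI conjI ballI)
      show "inv x \<in> carrier G" using xc by simp
      fix h assume h: "h \<in> F"
      have hc: "h \<in> carrier G" using h Fc by auto
      have e: "x \<otimes> h = h \<otimes> x" using x h unfolding centraliser_def by simp
      have "inv x \<otimes> h = inv x \<otimes> (h \<otimes> x) \<otimes> inv x" using xc hc by (simp add: m_assoc)
      also have "\<dots> = inv x \<otimes> (x \<otimes> h) \<otimes> inv x" using e by simp
      also have "\<dots> = h \<otimes> inv x" using xc hc by (simp add: m_assoc)
      finally show "inv x \<otimes> h = h \<otimes> inv x" .
    qed
  qed
  have conj: "g \<otimes> x \<otimes> inv g \<in> centraliser G F" if g: "g \<in> carrier G" and x: "x \<in> centraliser G F" for g x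
    unfolding centraliser_def
  proof (intro CollectI conjI ballI)
    have xc: "x \<in> carrier G" using x unfolding centraliser_def by auto
    show "g \<otimes> x \<otimes> inv g \<in> carrier G" using xc g by simp
    fix h assume h: "h \<in> F"
    have hc: "h \<in> carrier G" using h Fc by auto
    define h' where "h' = inv g \<otimes> h \<otimes> g"
    have h'F: "h' \<in> F" unfolding h'_def using normal.inv_op_closed1[OF F g h] .
    have h'c: "h' \<in> carrier G" using h'F Fc by auto
    have e: "x \<otimes> h' = h' \<otimes> x" using x h'F unfolding centraliser_def by simp
    have gh': "g \<otimes> h' = h \<otimes> g" unfolding h'_def using g hc by (simp add: m_assoc)
    have h'g: "h' \<otimes> inv g = inv g \<otimes> h" unfolding h'_def using g hc by (simp add: m_assoc)
    have "g \<otimes> x \<otimes> inv g \<otimes> h = g \<otimes> x \<otimes> (inv g \<otimes> h)" using g xc hc by (simp add: m_assoc)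
    also have "\<dots> = g \<otimes> x \<otimes> (h' \<otimes> inv g)" using h'g by simp
    also have "\<dots> = g \<otimes> (x \<otimes> h') \<otimes> inv g" using g xc h'c by (simp add: m_assoc)
    also have "\<dots> = g \<otimes> (h' \<otimes> x) \<otimes> inv g" using e by simp
    also have "\<dots> = (g \<otimes> h') \<otimes> x \<otimes> inv g" using g xc h'c by (simp add: m_assoc)
    also have "\<dots> = (h \<otimes> g) \<otimes> x \<otimes> inv g" using gh' by simp
    also have "\<dots> = h \<otimes> (g \<otimes> x \<otimes> inv g)" using g xc hc by (simp add: m_assoc)
    finally show "g \<otimes> x \<otimes> inv g \<otimes> h = h \<otimes> (g \<otimes> x \<otimes> inv g)" .
  qed
  show ?thesis using sub conj normal_inv_iff by blast
qed

lemma (in group) fit_centraliser: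
  assumes fin: "finite (carrier G)" and sf: "squarefree (card (fitting_subgroup G))"
    and sol: "solvable G"
  shows "centraliser G (fitting_subgroup G) = fitting_subgroup G"
proof -
  let ?F = "fitting_subgroup G"
  let ?C = "centraliser G ?F"
  have F: "subgroup ?F G" by (rule fit_sub)
  have Fc: "?F \<subseteq> carrier G" using subgroup.subset[OF F] .
  have FC: "?F \<subseteq> ?C" unfolding centraliser_def using Fc fit_abelian[OF fin sf] by auto
  have Cn: "?C \<lhd> G" by (rule centraliser_normal[OF fit_normal])
  have Cc: "?C \<subseteq> carrier G" unfolding centraliser_def by auto
  define D where "D = (\<lambda>k. (derived G ^^ k) ?C)"
  have Dn: "D k \<lhd> G" for k unfolding D_def by (rule derived_pow_normal[OF Cn])
  have DC: "D k \<subseteq> ?C" for k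
  proof (induction k)
    case 0 then show ?case unfolding D_def by simp
  next
    case (Suc k)
    have "D (Suc k) = derived G (D k)" unfolding D_def by simp
    also have "\<dots> \<subseteq> D k" by (rule derived_incl[OF order_refl normal_imp_subgroup[OF Dn]])
    finally show ?case using Suc by simp
  qed
  obtain n where n: "(derived G ^^ n) (carrier G) = {\<one>}"
    using sol solvable_iff_trivial_derived_seq by auto
  have "D n \<subseteq> {\<one>}" unfolding D_def using mono_exp_of_derived[OF Cc, of n] n by simp
  then have Pn: "D n \<subseteq> ?F" using subgroup.one_closed[OF F] by auto
  define i where "i = (LEAST i. D i \<subseteq> ?F)"
  have Pi: "D i \<subseteq> ?F" unfolding i_def by (rule LeastI[of "\<lambda>i. D i \<subseteq> ?F", OF Pn])
  have "?C \<subseteq> ?F"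
  proof (cases i)
    case 0 then show ?thesis using Pi unfolding D_def by simp
  next
    case (Suc j)
    have notj: "\<not> D j \<subseteq> ?F"
    proof
      assume "D j \<subseteq> ?F"
      then have "i \<le> j" unfolding i_def by (rule Least_le)
      then show False using Suc by simp
    qed
    have derj: "derived G (D j) \<subseteq> ?F" using Pi Suc unfolding D_def by simp
    have Dj: "subgroup (D j) G" using normal_imp_subgroup[OF Dn] .
    have Djc: "D j \<subseteq> carrier G" using subgroup.subset[OF Dj] .
    let ?L = "lower_central (G\<lparr>carrier := D j\<rparr>)"
    have L0: "?L 0 = D j" by simp
    have L1: "?L (Suc 0) \<subseteq> ?F"
    proof -
      have "{h \<otimes> g \<otimes> inv h \<otimes> inv g | h g. h \<in> ?L 0 \<and> g \<in> D j} \<subseteq> derived G (D j)"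
        unfolding L0 derived_def using generate.incl[of _ "derived_set G (D j)" G] by blast
      then have "{h \<otimes> g \<otimes> inv h \<otimes> inv g | h g. h \<in> ?L 0 \<and> g \<in> D j} \<subseteq> ?F"
        using derj by blast
      then show ?thesis unfolding lc_formula[OF Dj, of 0] by (rule generate_subgroup_incl[OF _ F])
    qed
    have L2: "?L (Suc (Suc 0)) = {\<one>}"
    proof -
      have "{h \<otimes> g \<otimes> inv h \<otimes> inv g | h g. h \<in> ?L (Suc 0) \<and> g \<in> D j} \<subseteq> {\<one>}"
      proof
        fix x assume "x \<in> {h \<otimes> g \<otimes> inv h \<otimes> inv g | h g. h \<in> ?L (Suc 0) \<and> g \<in> D j}"
        then obtain h g where hg: "h \<in> ?L (Suc 0)" "g \<in> D j" and x: "x = h \<otimes> g \<otimes> inv h \<otimes> inv g"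
          by blast
        have hF: "h \<in> ?F" using hg L1 by blast
        have gC: "g \<in> ?C" using hg DC by blast
        have e: "g \<otimes> h = h \<otimes> g" using gC hF unfolding centraliser_def by simp
        have "x = \<one>" unfolding x using one_from_comm[of h g] hF gC Fc Cc e by auto
        then show "x \<in> {\<one>}" by simp
      qed
      then show ?thesis unfolding lc_formula[OF Dj, of "Suc 0"] by (rule gen_sub_one)
    qed
    have "nilpotent_group (G\<lparr>carrier := D j\<rparr>)"
      unfolding nilpotent_group_def using subgroup_imp_group[OF Dj] L2 by auto
    then have "D j \<in> nilp_normals G" unfolding nilp_normals_def using Dn by simp
    then have "D j \<subseteq> ?F" by (rule nilp_sub_fit)
    then show ?thesis using notj by simp
  qed
  then show ?thesis using FC by simp
qed

lemma (in group) fit_conj_pow: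
  assumes fin: "finite (carrier G)" and sf: "squarefree (card (fitting_subgroup G))"
    and g: "g \<in> carrier G"
  shows "\<exists>b::nat. \<forall>f\<in>fitting_subgroup G. g \<otimes> f \<otimes> inv g = f [^] b"
proof -
  let ?F = "fitting_subgroup G"
  obtain z where z: "z \<in> ?F" and Fz: "?F = generate G {z}" using fit_cyclic[OF fin sf] by blast
  have zc: "z \<in> carrier G" using z subgroup.subset[OF fit_sub] by blast
  have Fp: "?F = {z [^] k | k. k \<in> (UNIV :: nat set)}"
    using Fz generate_pow_on_finite_carrier[OF fin zc] by simp
  have "g \<otimes> z \<otimes> inv g \<in> ?F" using normal.inv_op_closed2[OF fit_normal g z] .
  then obtain b::nat where b: "g \<otimes> z \<otimes> inv g = z [^] b" using Fp by auto
  have "\<forall>f\<in>?F. g \<otimes> f \<otimes> inv g = f [^] b"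
  proof
    fix f assume "f \<in> ?F"
    then obtain a::nat where a: "f = z [^] a" using Fp by auto
    have "g \<otimes> f \<otimes> inv g = (g \<otimes> z \<otimes> inv g) [^] a" unfolding a by (rule conj_pow_hom[OF g zc])
    also have "\<dots> = z [^] (b * a)" unfolding b using zc by (simp add: nat_pow_pow)
    also have "\<dots> = f [^] b" unfolding a using zc by (simp add: nat_pow_pow mult.commute)
    finally show "g \<otimes> f \<otimes> inv g = f [^] b" .
  qed
  then show ?thesis by blast
qed

lemma (in group) comm_in_fit:
  assumes fin: "finite (carrier G)" and sf: "squarefree (card (fitting_subgroup G))"
    and sol: "solvable G" and g: "g \<in> carrier G" and h: "h \<in> carrier G"
  shows "g \<otimes> h \<otimes> inv g \<otimes> inv h \<in> fitting_subgroup G"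
proof -
  let ?F = "fitting_subgroup G"
  have Fc: "?F \<subseteq> carrier G" using subgroup.subset[OF fit_sub] .
  obtain a::nat where a: "\<forall>f\<in>?F. g \<otimes> f \<otimes> inv g = f [^] a" using fit_conj_pow[OF fin sf g] by blast
  obtain b::nat where b: "\<forall>f\<in>?F. h \<otimes> f \<otimes> inv h = f [^] b" using fit_conj_pow[OF fin sf h] by blast
  define Xg where "Xg = g \<otimes> h"
  define Yg where "Yg = h \<otimes> g"
  have Xg: "Xg \<in> carrier G" and Yg: "Yg \<in> carrier G" unfolding Xg_def Yg_def using g h by auto
  have XgYg: "Xg \<otimes> f \<otimes> inv Xg = Yg \<otimes> f \<otimes> inv Yg" if f: "f \<in> ?F" for f
  proof -
    have fc: "f \<in> carrier G" using f Fc by blast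
    have "Xg \<otimes> f \<otimes> inv Xg = g \<otimes> (h \<otimes> f \<otimes> inv h) \<otimes> inv g"
      unfolding Xg_def using g h fc by (simp add: m_assoc inv_mult_group)
    also have "\<dots> = g \<otimes> f [^] b \<otimes> inv g" using b f by simp
    also have "\<dots> = (g \<otimes> f \<otimes> inv g) [^] b" by (rule conj_pow_hom[OF g fc])
    also have "\<dots> = f [^] (a * b)" using a f fc by (simp add: nat_pow_pow)
    finally have 1: "Xg \<otimes> f \<otimes> inv Xg = f [^] (a * b)" .
    have "Yg \<otimes> f \<otimes> inv Yg = h \<otimes> (g \<otimes> f \<otimes> inv g) \<otimes> inv h"
      unfolding Yg_def using g h fc by (simp add: m_assoc inv_mult_group)
    also have "\<dots> = h \<otimes> f [^] a \<otimes> inv h" using a f by simp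
    also have "\<dots> = (h \<otimes> f \<otimes> inv h) [^] a" by (rule conj_pow_hom[OF h fc])
    also have "\<dots> = f [^] (a * b)" using b f fc by (simp add: nat_pow_pow mult.commute)
    finally have 2: "Yg \<otimes> f \<otimes> inv Yg = f [^] (a * b)" .
    show ?thesis using 1 2 by simp
  qed
  define w where "w = inv Yg \<otimes> Xg"
  have w: "w \<in> carrier G" unfolding w_def using Xg Yg by simp
  have wF: "w \<in> centraliser G ?F" unfolding centraliser_def
  proof (intro CollectI conjI ballI)
    show "w \<in> carrier G" by (rule w)
    fix f assume f: "f \<in> ?F"
    have fc: "f \<in> carrier G" using f Fc by blast
    have "w \<otimes> f = inv Yg \<otimes> (Xg \<otimes> f \<otimes> inv Xg) \<otimes> Xg" unfolding w_def using Xg Yg fc by (simp add: m_assoc)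
    also have "\<dots> = inv Yg \<otimes> (Yg \<otimes> f \<otimes> inv Yg) \<otimes> Xg" using XgYg[OF f] by simp
    also have "\<dots> = f \<otimes> w" unfolding w_def using Xg Yg fc by (simp add: m_assoc)
    finally show "w \<otimes> f = f \<otimes> w" .
  qed
  then have wF': "w \<in> ?F" using fit_centraliser[OF fin sf sol] by simp
  have "Yg \<otimes> w \<otimes> inv Yg = g \<otimes> h \<otimes> inv g \<otimes> inv h"
    unfolding w_def Xg_def Yg_def using g h by (simp add: m_assoc inv_mult_group)
  moreover have "Yg \<otimes> w \<otimes> inv Yg \<in> ?F" using normal.inv_op_closed2[OF fit_normal Yg wF'] .
  ultimately show ?thesis by simp
qed

lemma permg_carrier [simp]: "carrier (perm_group V G) = G"
  unfolding perm_group_def by simp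

lemma permg_mult:
  assumes "x \<in> Bij V" "y \<in> Bij V" "v \<in> V"
  shows "(x \<otimes>\<^bsub>perm_group V G\<^esub> y) v = x (y v)"
  using assms unfolding perm_group_def BijGroup_def compose_def by simp

lemma permg_one: "\<one>\<^bsub>perm_group V G\<^esub> = (\<lambda>x\<in>V. x)"
  unfolding perm_group_def BijGroup_def by simp

lemma permg_group:
  assumes "subgroup G (BijGroup V)" shows "group (perm_group V G)"
  unfolding perm_group_def using group.subgroup_imp_group[OF group_BijGroup assms] .

lemma Bij_finite: "finite V \<Longrightarrow> finite (Bij V)"
proof -
  assume fV: "finite V"
  have "Bij V \<subseteq> (\<Pi>\<^sub>E i \<in> V. V)"
  proof
    fix f assume f: "f \<in> Bij V"
    show "f \<in> (\<Pi>\<^sub>E i \<in> V. V)" using Bij_imp_extensional[OF f] Bij_imp_funcset[OF f]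
      by (simp add: PiE_def)
  qed
  moreover have "finite (\<Pi>\<^sub>E i \<in> V. V)" by (rule finite_PiE[OF fV fV])
  ultimately show ?thesis by (rule finite_subset)
qed

lemma gdist_one:
  assumes sg: "simple_graph V E" and con: "connected_graph V E" and u: "u \<in> V" and v: "v \<in> V"
  shows "gdist V E u v = 1 \<longleftrightarrow> E u v"
proof
  assume g1: "gdist V E u v = 1"
  obtain n where "walk_n E V n u v" using con u v unfolding connected_graph_def by blast
  then have "walk_n E V (gdist V E u v) u v" unfolding gdist_def by (rule LeastI)
  then have "walk_n E V 1 u v" using g1 by simp
  then show "E u v" by simp
next
  assume e: "E u v"
  have w1: "walk_n E V 1 u v" using e u v by simp
  have nw0: "\<not> walk_n E V 0 u v" using e sg u unfolding simple_graph_def by auto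
  show "gdist V E u v = 1" unfolding gdist_def
  proof (rule Least_equality)
    show "walk_n E V 1 u v" by (rule w1)
  next
    fix m assume "walk_n E V m u v" then show "1 \<le> m" using nw0 by (cases m) auto
  qed
qed

lemma (in group) comm_cancel:
  assumes "g \<in> carrier G" "h \<in> carrier G"
  shows "g \<otimes> h \<otimes> inv g \<otimes> inv h \<otimes> (h \<otimes> g) = g \<otimes> h"
  using assms by (simp add: m_assoc)

theorem lemma4p5:
  fixes V :: "'a set" and E :: "'a \<Rightarrow> 'a \<Rightarrow> bool" and G :: "('a \<Rightarrow> 'a) set"
  assumes "finite V"
    and "simple_graph V E"
    and "connected_graph V E"
    and "two_distance_transitive V E G"
    and "squarefree (card V)"
    and "solvable (perm_group V G)"
    and "squarefree (card (fitting_subgroup (perm_group V G)))"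
  shows "fitting_subgroup (perm_group V G) = centraliser (perm_group V G) (fitting_subgroup (perm_group V G))
    \<and> cyclic_subgroup (perm_group V G) (fitting_subgroup (perm_group V G))
    \<and> ((\<exists>m b. iso_complete_multipartite V E m b \<and> m \<ge> 3 \<and> b \<ge> 2 \<and> squarefree (m * b))
       \<or> (semiregular V (fitting_subgroup (perm_group V G))
          \<and> card (perm_orbits V (fitting_subgroup (perm_group V G))) \<le> 2))"
proof -
  note fin = assms(1) and sg = assms(2) and con = assms(3) and sol = assms(6) and sf = assms(7)
  have sub: "subgroup G (BijGroup V)" and GA: "G \<subseteq> Aut V E" and vt: "vertex_transitive V G"
    and diam: "diameter_ge V E 2"
    and st: "\<And>u. u \<in> V \<Longrightarrow> stab_transitive_on G u (sphere V E 1 u)"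
    using assms(4) unfolding two_distance_transitive_def by auto
  let ?P = "perm_group V G"
  let ?F = "fitting_subgroup ?P"
  interpret P: group ?P by (rule permg_group[OF sub])
  have GB: "G \<subseteq> Bij V" using subgroup.subset[OF sub] by (simp add: BijGroup_def)
  have finG: "finite G" using Bij_finite[OF fin] GB by (rule finite_subset[rotated])
  have finP: "finite (carrier ?P)" using finG by simp
  have FG: "?F \<subseteq> G" using subgroup.subset[OF P.fit_sub] by simp
  have C: "?F = centraliser ?P ?F" using P.fit_centraliser[OF finP sf sol] by simp
  have cyc: "cyclic_subgroup ?P ?F" unfolding cyclic_subgroup_def using P.fit_cyclic[OF finP sf] .
  have ev: "(x \<otimes>\<^bsub>?P\<^esub> y) v = x (y v)" if "x \<in> G" "y \<in> G" "v \<in> V" for x y v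
    by (rule permg_mult) (use that GB in auto)
  have inV: "x v \<in> V" if "x \<in> G" "v \<in> V" for x v
    using Bij_imp_funcset[of x V] that GB by auto
  have invG: "inv\<^bsub>?P\<^esub> x \<in> G" if "x \<in> G" for x using P.inv_closed[of x] that by simp
  have invl: "(inv\<^bsub>?P\<^esub> x) (x v) = v" if x: "x \<in> G" and v: "v \<in> V" for x v
  proof -
    have "(inv\<^bsub>?P\<^esub> x \<otimes>\<^bsub>?P\<^esub> x) v = v" using P.l_inv[of x] x v by (simp add: permg_one)
    then show ?thesis using ev[OF invG[OF x] x v] by simp
  qed
  have invr: "x ((inv\<^bsub>?P\<^esub> x) v) = v" if x: "x \<in> G" and v: "v \<in> V" for x v
  proof -
    have "(x \<otimes>\<^bsub>?P\<^esub> inv\<^bsub>?P\<^esub> x) v = v" using P.r_inv[of x] x v by (simp add: permg_one)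
    then show ?thesis using ev[OF x invG[OF x] v] by simp
  qed
  have powfix: "(f [^]\<^bsub>?P\<^esub> (n::nat)) v = v" if f: "f \<in> G" and v: "v \<in> V" and fv: "f v = v" for f v n
  proof (induction n)
    case 0 then show ?case using v by (simp add: permg_one)
  next
    case (Suc n)
    have "f [^]\<^bsub>?P\<^esub> n \<in> G" using P.nat_pow_closed[of f n] f by simp
    then show ?case using ev[of "f [^]\<^bsub>?P\<^esub> n" f v] f v fv Suc by simp
  qed
  have semi: "semiregular V ?F"
    unfolding semiregular_def
  proof (intro ballI impI)
    fix v f assume v: "v \<in> V" and fF: "f \<in> ?F" and fv: "f v = v"
    have fG: "f \<in> G" using fF FG by blast
    have fix_all: "f w = w" if w: "w \<in> V" for w
    proof -
      obtain g where g: "g \<in> G" and gv: "g v = w" using vt v w unfolding vertex_transitive_def by blast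
      have ig: "inv\<^bsub>?P\<^esub> g \<in> carrier ?P" using invG[OF g] by simp
      obtain b::nat where b: "\<forall>f'\<in>?F. inv\<^bsub>?P\<^esub> g \<otimes>\<^bsub>?P\<^esub> f' \<otimes>\<^bsub>?P\<^esub> inv\<^bsub>?P\<^esub> (inv\<^bsub>?P\<^esub> g) = f' [^]\<^bsub>?P\<^esub> b"
        using P.fit_conj_pow[OF finP sf ig] by blast
      have "inv\<^bsub>?P\<^esub> g \<otimes>\<^bsub>?P\<^esub> f \<otimes>\<^bsub>?P\<^esub> g = f [^]\<^bsub>?P\<^esub> b"
        using b fF P.inv_inv[of g] g by simp
      then have "(inv\<^bsub>?P\<^esub> g \<otimes>\<^bsub>?P\<^esub> f \<otimes>\<^bsub>?P\<^esub> g) v = v" using powfix[OF fG v fv] by simp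
      moreover have "(inv\<^bsub>?P\<^esub> g \<otimes>\<^bsub>?P\<^esub> f \<otimes>\<^bsub>?P\<^esub> g) v = (inv\<^bsub>?P\<^esub> g) (f w)"
      proof -
        have igf: "inv\<^bsub>?P\<^esub> g \<otimes>\<^bsub>?P\<^esub> f \<in> G" using P.m_closed[of "inv\<^bsub>?P\<^esub> g" f] invG[OF g] fG by simp
        have "(inv\<^bsub>?P\<^esub> g \<otimes>\<^bsub>?P\<^esub> f \<otimes>\<^bsub>?P\<^esub> g) v = (inv\<^bsub>?P\<^esub> g \<otimes>\<^bsub>?P\<^esub> f) (g v)"
          by (rule ev[OF igf g v])
        also have "\<dots> = (inv\<^bsub>?P\<^esub> g) (f w)" using ev[OF invG[OF g] fG] gv inV[OF g v] by simp
        finally show ?thesis .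
      qed
      ultimately have e: "(inv\<^bsub>?P\<^esub> g) (f w) = v" by simp
      have "f w = g ((inv\<^bsub>?P\<^esub> g) (f w))" using invr[OF g inV[OF fG w]] by simp
      also have "\<dots> = w" using e gv by simp
      finally show ?thesis .
    qed
    have "f = (\<lambda>x\<in>V. x)"
    proof
      fix x show "f x = (\<lambda>x\<in>V. x) x"
      proof (cases "x \<in> V")
        case True then show ?thesis using fix_all by simp
      next
        case False
        have "f \<in> extensional V" using Bij_imp_extensional[of f V] fG GB by blast
        then show ?thesis using False by (simp add: extensional_def)
      qed
    qed
    then show "f = \<one>\<^bsub>BijGroup V\<^esub>" by (simp add: BijGroup_def)
  qed
  have stabF: "\<exists>c\<in>?F. g w = c w" if u: "u \<in> V" and g: "g \<in> G" and gu: "g u = u" and w: "w \<in> V" for u g w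
  proof -
    obtain h where h: "h \<in> G" and hu: "h u = w" using vt u w unfolding vertex_transitive_def by blast
    define c where "c = g \<otimes>\<^bsub>?P\<^esub> h \<otimes>\<^bsub>?P\<^esub> inv\<^bsub>?P\<^esub> g \<otimes>\<^bsub>?P\<^esub> inv\<^bsub>?P\<^esub> h"
    have cF: "c \<in> ?F" unfolding c_def by (rule P.comm_in_fit[OF finP sf sol]) (use g h in simp_all)
    have cG: "c \<in> G" using cF FG by blast
    have e: "c \<otimes>\<^bsub>?P\<^esub> (h \<otimes>\<^bsub>?P\<^esub> g) = g \<otimes>\<^bsub>?P\<^esub> h"
    proof -
      have gc: "g \<in> carrier ?P" and hc: "h \<in> carrier ?P" using g h by auto
      show ?thesis unfolding c_def by (rule P.comm_cancel[OF gc hc])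
    qed
    have hg: "h \<otimes>\<^bsub>?P\<^esub> g \<in> G" using P.m_closed[of h g] g h by simp
    have "(c \<otimes>\<^bsub>?P\<^esub> (h \<otimes>\<^bsub>?P\<^esub> g)) u = c w"
      using ev[OF cG hg u] ev[OF h g u] gu hu by simp
    moreover have "(g \<otimes>\<^bsub>?P\<^esub> h) u = g w" using ev[OF g h u] hu by simp
    ultimately have "g w = c w" using e by simp
    then show ?thesis using cF by blast
  qed
  define Orb where "Orb = (\<lambda>x. {h x | h. h \<in> ?F})"
  have oneF: "\<one>\<^bsub>?P\<^esub> \<in> ?F" using subgroup.one_closed[OF P.fit_sub] .
  have selfO: "x \<in> Orb x" if "x \<in> V" for x
  proof -
    have e: "x = \<one>\<^bsub>?P\<^esub> x" using that by (simp add: permg_one)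
    show ?thesis unfolding Orb_def by (rule CollectI, rule exI[of _ "\<one>\<^bsub>?P\<^esub>"]) (use e oneF in simp)
  qed
  have orbit_eq: "Orb (f x) = Orb x" if f: "f \<in> ?F" and x: "x \<in> V" for f x
  proof
    have fG: "f \<in> G" using f FG by blast
    show "Orb (f x) \<subseteq> Orb x"
    proof
      fix y assume "y \<in> Orb (f x)"
      then obtain h where h: "h \<in> ?F" and y: "y = h (f x)" unfolding Orb_def by blast
      have hG: "h \<in> G" using h FG by blast
      have "y = (h \<otimes>\<^bsub>?P\<^esub> f) x" using y ev[OF hG fG x] by simp
      moreover have "h \<otimes>\<^bsub>?P\<^esub> f \<in> ?F" using subgroup.m_closed[OF P.fit_sub h f] .
      ultimately show "y \<in> Orb x" unfolding Orb_def by blast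
    qed
  next
    have fG: "f \<in> G" using f FG by blast
    show "Orb x \<subseteq> Orb (f x)"
    proof
      fix y assume "y \<in> Orb x"
      then obtain h where h: "h \<in> ?F" and y: "y = h x" unfolding Orb_def by blast
      have hG: "h \<in> G" using h FG by blast
      have if': "inv\<^bsub>?P\<^esub> f \<in> ?F" using subgroup.m_inv_closed[OF P.fit_sub f] by simp
      have hif: "h \<otimes>\<^bsub>?P\<^esub> inv\<^bsub>?P\<^esub> f \<in> ?F" using subgroup.m_closed[OF P.fit_sub h if'] .
      have "(h \<otimes>\<^bsub>?P\<^esub> inv\<^bsub>?P\<^esub> f) (f x) = h ((inv\<^bsub>?P\<^esub> f) (f x))"
        using ev[OF hG invG[OF fG] inV[OF fG x]] .
      also have "\<dots> = y" using invl[OF fG x] y by simp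
      finally show "y \<in> Orb (f x)" unfolding Orb_def using hif by blast
    qed
  qed
  obtain a b where a: "a \<in> V" and b: "b \<in> V" and ab: "gdist V E a b \<ge> 2"
    using diam unfolding diameter_ge_def by blast
  have "a \<noteq> b"
  proof
    assume "a = b"
    then have "walk_n E V 0 a b" using a by simp
    then have "gdist V E a b = 0" unfolding gdist_def by (rule Least_eq_0)
    then show False using ab by simp
  qed
  obtain n where wab: "walk_n E V n a b" using con a b unfolding connected_graph_def by blast
  have "n \<noteq> 0" using wab \<open>a \<noteq> b\<close> by (cases n) auto
  then obtain m where "n = Suc m" by (cases n) auto
  then obtain w0 where w0: "w0 \<in> V" and aw: "E a w0" using wab by auto
  have nbr: "v \<in> Orb w" if x: "x \<in> V" and w: "w \<in> V" and ex: "E x w" and v: "v \<in> V" and xv: "E x v" for x w v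
  proof -
    have "w \<in> sphere V E 1 x" "v \<in> sphere V E 1 x"
      unfolding sphere_def using gdist_one[OF sg con x] w v ex xv by auto
    then obtain g where g: "g \<in> G" "g x = x" "g w = v"
      using st[OF x] unfolding stab_transitive_on_def by blast
    obtain c where c: "c \<in> ?F" "g w = c w" using stabF[OF x g(1) g(2) w] by blast
    show ?thesis unfolding Orb_def using c g(3) by auto
  qed
  have symE: "E w0 a" using sg a w0 aw unfolding simple_graph_def by blast
  have move: "y \<in> Orb z" if x: "x \<in> V" and z: "z \<in> V" and xz: "\<forall>v\<in>V. E x v \<longrightarrow> v \<in> Orb z"
    and f: "f \<in> ?F" and y: "y \<in> V" and fy: "E (f x) y" for x z f y
  proof -
    have fG: "f \<in> G" using f FG by blast
    define y' where "y' = (inv\<^bsub>?P\<^esub> f) y"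
    have y': "y' \<in> V" unfolding y'_def using inV[OF invG[OF fG] y] .
    have fy': "f y' = y" unfolding y'_def using invr[OF fG y] .
    have aut: "E (f x) (f y') \<longleftrightarrow> E x y'" using GA fG x y' unfolding Aut_def by blast
    have "E x y'" using aut fy' fy by simp
    then have "y' \<in> Orb z" using xz y' by blast
    then obtain k where k: "k \<in> ?F" "y' = k z" unfolding Orb_def by blast
    have kG: "k \<in> G" using k FG by blast
    have "y = (f \<otimes>\<^bsub>?P\<^esub> k) z" using ev[OF fG kG z] fy' k by simp
    moreover have "f \<otimes>\<^bsub>?P\<^esub> k \<in> ?F" using subgroup.m_closed[OF P.fit_sub f k(1)] .
    ultimately show ?thesis unfolding Orb_def by blast
  qed
  define S where "S = Orb a \<union> Orb w0"
  have closed: "y \<in> S" if x: "x \<in> S" and y: "y \<in> V" and xy: "E x y" for x y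
  proof (cases "x \<in> Orb a")
    case True
    then obtain f where f: "f \<in> ?F" "x = f a" unfolding Orb_def by blast
    have "y \<in> Orb w0" using move[OF a w0 _ f(1) y] nbr[OF a w0 aw] xy f(2) by blast
    then show ?thesis unfolding S_def by blast
  next
    case False
    then have "x \<in> Orb w0" using x unfolding S_def by blast
    then obtain f where f: "f \<in> ?F" "x = f w0" unfolding Orb_def by blast
    have "y \<in> Orb a" using move[OF w0 a _ f(1) y] nbr[OF w0 a symE] xy f(2) by blast
    then show ?thesis unfolding S_def by blast
  qed
  have walkS: "\<forall>x. x \<in> S \<longrightarrow> walk_n E V k x v \<longrightarrow> v \<in> S" for k v
  proof (induction k)
    case 0 then show ?case by simp
  next
    case (Suc k)
    show ?case
    proof (intro allI impI)
      fix x assume xS: "x \<in> S" and wk: "walk_n E V (Suc k) x v"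
      then obtain y where y: "y \<in> V" "E x y" "walk_n E V k y v" by auto
      have "y \<in> S" by (rule closed[OF xS y(1) y(2)])
      then show "v \<in> S" using Suc y(3) by blast
    qed
  qed
  have allS: "v \<in> S" if v: "v \<in> V" for v
  proof -
    obtain k where "walk_n E V k a v" using con a v unfolding connected_graph_def by blast
    moreover have "a \<in> S" unfolding S_def using selfO[OF a] by blast
    ultimately show ?thesis using walkS by blast
  qed
  have orbs: "perm_orbits V ?F \<subseteq> {Orb a, Orb w0}"
  proof
    fix Xo assume "Xo \<in> perm_orbits V ?F"
    then obtain v where v: "v \<in> V" and Xo: "Xo = Orb v" unfolding perm_orbits_def Orb_def by blast
    have "v \<in> Orb a \<or> v \<in> Orb w0" using allS[OF v] unfolding S_def by blast
    then show "Xo \<in> {Orb a, Orb w0}"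
    proof
      assume "v \<in> Orb a"
      then obtain f where "f \<in> ?F" "v = f a" unfolding Orb_def by blast
      then show ?thesis using Xo orbit_eq[OF _ a] by simp
    next
      assume "v \<in> Orb w0"
      then obtain f where "f \<in> ?F" "v = f w0" unfolding Orb_def by blast
      then show ?thesis using Xo orbit_eq[OF _ w0] by simp
    qed
  qed
  have "card (perm_orbits V ?F) \<le> card {Orb a, Orb w0}" by (rule card_mono[OF _ orbs]) simp
  also have "\<dots> \<le> 2" by (cases "Orb a = Orb w0") auto
  finally have "card (perm_orbits V ?F) \<le> 2" .
  then show ?thesis using C cyc semi by blast
qed

end
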